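(* Let $M_K$ be an Oeljeklaus–Toma manifold as described in the context. For any point $x\in M_K$, the leaf $\mathcal L_x$ of the foliation $\mathcal F$ through $x$ is dense in the fiber $p^{-1}(p(x))$ (a real torus of dimension $m+1$). Equivalently, for any $t=(t_1,\dots,t_m)\in\mathbb{H}^{m-1}\times\mathbb{C}$, the set $\pi(\{(t_1,\dots,t_{m-1})\}\times\mathbb{C})$ is dense in the fiber of $p$ over $p(\pi(t))\in\mathbb{T}^{m-1}$.
   Context: Let $K$ be a number field of degree $n=s+2$ over $\mathbb{Q}$ with $s\ge 1$, having exactly $s$ real embeddings $\sigma_1,\dots,\sigma_s$ and exactly one pair of complex conjugate embeddings $\sigma_{s+1},\sigma_{s+2}=\overline{\sigma_{s+1}}$; put $m=s+1$. Let $O_K$ be its ring of integers and $O_K^{*,+}$ the group of units $a$ with $\sigma_i(a)>0$ for $1\le i\le s$. Let $G\subset O_K^{*,+}$ be an admissible subgroup, i.e. a subgroup of rank $s$ such that $\Lambda=\{(\log\sigma_1(a),\dots,\log\sigma_s(a)):a\in G\}$ is a full lattice in $\mathbb{R}^{m-1}$. With $\mathbb{H}$ the upper half plane, $b\in O_K$ acts on $\mathbb{H}^{m-1}\times\mathbb{C}$ by $z\mapsto z+(\sigma_1(b),\dots,\sigma_m(b))$ and $a\in G$ by $z\mapsto(\sigma_1(a)z_1,\dots,\sigma_m(a)z_m)$; the generated group $\Gamma=G\ltimes O_K$ acts freely and properly discontinuously and $M_K=(\mathbb{H}^{m-1}\times\mathbb{C})/\Gamma$ with covering map $\pi$. Write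 $z_j=x_j+\sqrt{-1}y_j$. The map $z\mapsto(\log y_1,\dots,\log y_{m-1})$ induces a fiber bundle projection $p:M_K\to\mathbb{T}^{m-1}=\mathbb{R}^{m-1}/\Lambda$ with fibers real tori $\mathbb{T}^{m+1}$. The foliation of $\mathbb{H}^{m-1}\times\mathbb{C}$ with leaves $\{z'\}\times\mathbb{C}$ is $\Gamma$-invariant and induces a nonsingular holomorphic foliation $\mathcal F$ on $M_K$ whose leaves are the images under $\pi$ of these leaves. *)

theory Defs
  imports "HOL-Analysis.Analysis" "HOL-Computational_Algebra.Polynomial"
begin

text \<open>The number field K is modelled as a subfield of the complex numbers
  (any number field admits such an embedding). Indices are 0-based:
  sigma 0, ..., sigma (s-1) are the real embeddings, sigma s and sigma (s+1)
  the pair of complex conjugate ones. Points of H^(m-1) x C (m = s+1) are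
  functions z :: nat => complex with z j in H for j < s, z s arbitrary and
  z j = 0 for j > s.\<close>

definition subfield_C :: "complex set \<Rightarrow> bool" where
  "subfield_C K \<longleftrightarrow> 0 \<in> K \<and> 1 \<in> K \<and>
     (\<forall>x\<in>K. \<forall>y\<in>K. x + y \<in> K \<and> x - y \<in> K \<and> x * y \<in> K) \<and>
     (\<forall>x\<in>K. x \<noteq> 0 \<longrightarrow> inverse x \<in> K)"

definition Q_degree :: "complex set \<Rightarrow> nat \<Rightarrow> bool" where
  "Q_degree K n \<longleftrightarrow> (\<exists>b :: nat \<Rightarrow> complex.
     (\<forall>i<n. b i \<in> K) \<and>
     (\<forall>q :: nat \<Rightarrow> rat. (\<Sum>i<n. of_rat (q i) * b i) = 0 \<longrightarrow> (\<forall>i<n. q i = 0)) \<and>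
     (\<forall>x\<in>K. \<exists>q :: nat \<Rightarrow> rat. x = (\<Sum>i<n. of_rat (q i) * b i)))"

text \<open>Field embedding K -> C (only its values on K matter).\<close>
definition field_embedding :: "complex set \<Rightarrow> (complex \<Rightarrow> complex) \<Rightarrow> bool" where
  "field_embedding K f \<longleftrightarrow> f 1 = 1 \<and>
     (\<forall>x\<in>K. \<forall>y\<in>K. f (x + y) = f x + f y \<and> f (x * y) = f x * f y)"

definition algebraic_integer :: "complex \<Rightarrow> bool" where
  "algebraic_integer x \<longleftrightarrow> (\<exists>p :: complex poly.
     lead_coeff p = 1 \<and> (\<forall>i. coeff p i \<in> \<int>) \<and> poly p x = 0)"

definition ring_of_integers :: "complex set \<Rightarrow> complex set" where
  "ring_of_integers K = {x \<in> K. algebraic_integer x}"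

definition units_of_OK :: "complex set \<Rightarrow> complex set" where
  "units_of_OK K = {a \<in> ring_of_integers K. a \<noteq> 0 \<and> inverse a \<in> ring_of_integers K}"

definition pos_units :: "complex set \<Rightarrow> (nat \<Rightarrow> complex \<Rightarrow> complex) \<Rightarrow> nat \<Rightarrow> complex set" where
  "pos_units K \<sigma> s = {a \<in> units_of_OK K. \<forall>j<s. \<sigma> j a \<in> \<real> \<and> Re (\<sigma> j a) > 0}"

definition OT_field :: "complex set \<Rightarrow> (nat \<Rightarrow> complex \<Rightarrow> complex) \<Rightarrow> nat \<Rightarrow> bool" where
  "OT_field K \<sigma> s \<longleftrightarrow> s \<ge> 1 \<and> subfield_C K \<and> Q_degree K (s + 2) \<and>
     (\<forall>j < s + 2. field_embedding K (\<sigma> j)) \<and>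
     (\<forall>i < s + 2. \<forall>j < s + 2. i \<noteq> j \<longrightarrow> (\<exists>x\<in>K. \<sigma> i x \<noteq> \<sigma> j x)) \<and>
     (\<forall>f. field_embedding K f \<longrightarrow> (\<exists>j < s + 2. \<forall>x\<in>K. f x = \<sigma> j x)) \<and>
     (\<forall>j < s. \<forall>x\<in>K. \<sigma> j x \<in> \<real>) \<and>
     (\<exists>x\<in>K. \<sigma> s x \<notin> \<real>) \<and>
     (\<forall>x\<in>K. \<sigma> (s + 1) x = cnj (\<sigma> s x))"

definition mult_subgroup :: "complex set \<Rightarrow> complex set \<Rightarrow> bool" where
  "mult_subgroup G U \<longleftrightarrow> G \<subseteq> U \<and> 1 \<in> G \<and>
     (\<forall>a\<in>G. \<forall>b\<in>G. a * b \<in> G) \<and> (\<forall>a\<in>G. inverse a \<in> G)"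

text \<open>G has rank r (G is torsion free here, so: free abelian of rank r).\<close>
definition free_rank :: "complex set \<Rightarrow> nat \<Rightarrow> bool" where
  "free_rank G r \<longleftrightarrow> (\<exists>u :: nat \<Rightarrow> complex. (\<forall>i<r. u i \<in> G) \<and>
     (\<forall>a\<in>G. \<exists>!k. k \<in> {..<r} \<rightarrow>\<^sub>E (UNIV :: int set) \<and> a = (\<Prod>i<r. u i powi k i)))"

text \<open>Vectors of R^d are functions nat => real vanishing at indices >= d.\<close>
definition full_lattice :: "nat \<Rightarrow> (nat \<Rightarrow> real) set \<Rightarrow> bool" where
  "full_lattice d L \<longleftrightarrow> (\<exists>v :: nat \<Rightarrow> nat \<Rightarrow> real.
     (\<forall>i<d. \<forall>j\<ge>d. v i j = 0) \<and>
     (\<forall>c :: nat \<Rightarrow> real. (\<forall>j<d. (\<Sum>i<d. c i * v i j) = 0) \<longrightarrow> (\<forall>i<d. c i = 0)) \<and>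
     L = {(\<lambda>j. \<Sum>i<d. of_int (k i) * v i j) | k :: nat \<Rightarrow> int. True})"

definition log_map :: "(nat \<Rightarrow> complex \<Rightarrow> complex) \<Rightarrow> nat \<Rightarrow> complex \<Rightarrow> nat \<Rightarrow> real" where
  "log_map \<sigma> s a = (\<lambda>j. if j < s then ln (Re (\<sigma> j a)) else 0)"

definition Lambda :: "(nat \<Rightarrow> complex \<Rightarrow> complex) \<Rightarrow> nat \<Rightarrow> complex set \<Rightarrow> (nat \<Rightarrow> real) set" where
  "Lambda \<sigma> s G = log_map \<sigma> s ` G"

definition admissible :: "complex set \<Rightarrow> (nat \<Rightarrow> complex \<Rightarrow> complex) \<Rightarrow> nat \<Rightarrow> complex set \<Rightarrow> bool" where
  "admissible K \<sigma> s G \<longleftrightarrow> mult_subgroup G (pos_units K \<sigma> s) \<and> free_rank G s \<and>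
     full_lattice s (Lambda \<sigma> s G)"

definition OT_domain :: "nat \<Rightarrow> (nat \<Rightarrow> complex) set" where
  "OT_domain s = {z. (\<forall>j<s. Im (z j) > 0) \<and> (\<forall>j>s. z j = 0)}"

text \<open>Element (a,b) of Gamma = G \<ltimes> O_K acting by z \<mapsto> a z + b (every element
  of the group generated by the translations and the multiplications has this form).\<close>
definition gamma_act :: "(nat \<Rightarrow> complex \<Rightarrow> complex) \<Rightarrow> nat \<Rightarrow> complex \<Rightarrow> complex \<Rightarrow>
    (nat \<Rightarrow> complex) \<Rightarrow> nat \<Rightarrow> complex" where
  "gamma_act \<sigma> s a b z = (\<lambda>j. if j \<le> s then \<sigma> j a * z j + \<sigma> j b else 0)"

text \<open>The covering map pi: a point of M_K is a Gamma-orbit.\<close>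
definition OT_pi :: "complex set \<Rightarrow> (nat \<Rightarrow> complex \<Rightarrow> complex) \<Rightarrow> nat \<Rightarrow> complex set \<Rightarrow>
    (nat \<Rightarrow> complex) \<Rightarrow> (nat \<Rightarrow> complex) set" where
  "OT_pi K \<sigma> s G z = {gamma_act \<sigma> s a b z | a b. a \<in> G \<and> b \<in> ring_of_integers K}"

definition OT_topology :: "complex set \<Rightarrow> (nat \<Rightarrow> complex \<Rightarrow> complex) \<Rightarrow> nat \<Rightarrow> complex set \<Rightarrow>
    (nat \<Rightarrow> complex) set topology" where
  "OT_topology K \<sigma> s G = topology (\<lambda>U. U \<subseteq> OT_pi K \<sigma> s G ` OT_domain s \<and>
      openin (top_of_set (OT_domain s)) {z \<in> OT_domain s. OT_pi K \<sigma> s G z \<in> U})"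

definition log_Im :: "nat \<Rightarrow> (nat \<Rightarrow> complex) \<Rightarrow> nat \<Rightarrow> real" where
  "log_Im s z = (\<lambda>j. if j < s then ln (Im (z j)) else 0)"

text \<open>The fiber p^{-1}(p(pi t)), p induced by z \<mapsto> (log y_1,...,log y_{m-1}) mod Lambda.\<close>
definition OT_fiber :: "complex set \<Rightarrow> (nat \<Rightarrow> complex \<Rightarrow> complex) \<Rightarrow> nat \<Rightarrow> complex set \<Rightarrow>
    (nat \<Rightarrow> complex) \<Rightarrow> (nat \<Rightarrow> complex) set set" where
  "OT_fiber K \<sigma> s G t = OT_pi K \<sigma> s G `
     {z \<in> OT_domain s. log_Im s z - log_Im s t \<in> Lambda \<sigma> s G}"

definition OT_leaf :: "complex set \<Rightarrow> (nat \<Rightarrow> complex \<Rightarrow> complex) \<Rightarrow> nat \<Rightarrow> complex set \<Rightarrow>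
    (nat \<Rightarrow> complex) \<Rightarrow> (nat \<Rightarrow> complex) set set" where
  "OT_leaf K \<sigma> s G t = OT_pi K \<sigma> s G ` {z \<in> OT_domain s. \<forall>j<s. z j = t j}"

end

theory Submission
  imports Defs "Jordan_Normal_Form.Char_Poly" "Jordan_Normal_Form.Determinant"
begin


lemma alg_int_from_matrix:
  fixes M :: "nat \<Rightarrow> nat \<Rightarrow> int" and v :: "nat \<Rightarrow> complex" and n :: nat and x :: complex
  assumes kz: "kz < n" "v kz \<noteq> 0"
  and eq: "\<And>k. k < n \<Longrightarrow> (\<Sum>l<n. of_int (M k l) * v l) = x * v k"
  shows "algebraic_int x"
proof -
  define A :: "int mat" where "A = Matrix.mat n n (\<lambda>(k,l). M k l)"
  define A' :: "complex mat" where "A' = map_mat of_int A"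
  define w where "w = Matrix.vec n v"
  have A: "A \<in> carrier_mat n n" unfolding A_def by auto
  have A': "A' \<in> carrier_mat n n" unfolding A'_def A_def by auto
  have "A' *\<^sub>v w = x \<cdot>\<^sub>v w"
  proof (rule eq_vecI)
    fix k assume "k < dim_vec (x \<cdot>\<^sub>v w)"
    hence k: "k < n" by (simp add: w_def)
    have "(A' *\<^sub>v w) $ k = (\<Sum>l<n. of_int (M k l) * v l)"
      using k by (simp add: A'_def A_def w_def scalar_prod_def row_def atLeast0LessThan)
    also have "\<dots> = x * v k" using eq[OF k] .
    finally show "(A' *\<^sub>v w) $ k = (x \<cdot>\<^sub>v w) $ k" using k by (simp add: w_def)
  qed (simp add: A'_def A_def w_def)
  moreover have "w \<noteq> 0\<^sub>v n"
  proof
    assume "w = 0\<^sub>v n"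
    hence "w $ kz = 0" using kz by simp
    thus False using kz by (simp add: w_def)
  qed
  ultimately have "eigenvector A' w x"
    unfolding eigenvector_def using A' by (auto simp: w_def)
  hence "eigenvalue A' x" unfolding eigenvalue_def by blast
  hence root: "poly (char_poly A') x = 0" using eigenvalue_root_char_poly[OF A'] by simp
  have cp: "char_poly A' = map_poly of_int (char_poly A)"
    unfolding A'_def by (rule of_int_hom.char_poly_hom[OF A])
  have dm: "degree (char_poly A) = n \<and> coeff (char_poly A) n = 1"
    by (rule degree_monic_char_poly[OF A])
  show ?thesis
  proof (rule algebraic_int.intros[of "char_poly A'"])
    show "lead_coeff (char_poly A') = 1" using dm unfolding cp by (simp add: degree_map_poly coeff_map_poly)
    show "\<forall>i. coeff (char_poly A') i \<in> \<int>" unfolding cp by (simp add: coeff_map_poly)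
    show "poly (char_poly A') x = 0" by fact
  qed
qed

lemma alg_int_companion:
  assumes "algebraic_int (\<alpha>::complex)"
  obtains d :: nat and A :: "nat \<Rightarrow> nat \<Rightarrow> int" where "d > 0"
    "\<And>i. i < d \<Longrightarrow> \<alpha> * \<alpha>^i = (\<Sum>i'<d. of_int (A i i') * \<alpha>^i')"
proof -
  obtain P :: "int poly" where P: "poly (map_poly of_int P) \<alpha> = 0" "lead_coeff P = 1"
    using assms algebraic_int_altdef_ipoly by blast
  define d where "d = degree P"
  have d0: "d > 0"
  proof (rule ccontr)
    assume "\<not> d > 0"
    hence "degree P = 0" by (simp add: d_def)
    hence "poly (map_poly of_int P) \<alpha> = (of_int (coeff P 0) :: complex)"
      by (simp add: poly_altdef degree_map_poly coeff_map_poly)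
    moreover have "coeff P 0 = 1" using P(2) \<open>degree P = 0\<close> by (metis)
    ultimately show False using P by simp
  qed
  have "0 = (\<Sum>i\<le>d. of_int (coeff P i) * \<alpha>^i)"
    using P(1) by (simp add: poly_altdef degree_map_poly coeff_map_poly d_def)
  also have "\<dots> = (\<Sum>i<d. of_int (coeff P i) * \<alpha>^i) + \<alpha>^d"
    using P(2) by (simp add: lessThan_Suc_atMost[symmetric] d_def)
  finally have top: "\<alpha>^d = (\<Sum>i<d. of_int (- coeff P i) * \<alpha>^i)"
    by (simp add: sum_negf eq_neg_iff_add_eq_0 add.commute)
  define A where "A = (\<lambda>i i'. if i + 1 < d then (if i' = i + 1 then 1 else 0) else - coeff P i')"
  show ?thesis
  proof (rule that[OF d0])
    fix i assume i: "i < d"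
    show "\<alpha> * \<alpha>^i = (\<Sum>i'<d. of_int (A i i') * \<alpha>^i')"
    proof (cases "i + 1 < d")
      case True
      have "(\<Sum>i'<d. of_int (A i i') * \<alpha>^i') = (\<Sum>i'<d. if i' = i + 1 then \<alpha>^i' else 0)"
        using True by (intro sum.cong) (auto simp: A_def)
      also have "\<dots> = \<alpha>^(i+1)" using True by (simp add: sum.delta)
      finally show ?thesis by simp
    next
      case False
      hence "i + 1 = d" using i by simp
      hence "\<alpha> * \<alpha>^i = \<alpha>^d" by (metis power_Suc Suc_eq_plus1)
      also have "\<dots> = (\<Sum>i'<d. of_int (- coeff P i') * \<alpha>^i')" by (rule top)
      also have "\<dots> = (\<Sum>i'<d. of_int (A i i') * \<alpha>^i')"
        using False by (intro sum.cong) (simp_all add: A_def)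
      finally show ?thesis .
    qed
  qed
qed

lemma sum_pairs:
  fixes g :: "nat \<Rightarrow> 'a::comm_monoid_add"
  shows "(\<Sum>l<d*e. g l) = (\<Sum>i<d. \<Sum>j<e. g (i*e+j))"
proof -
  have "(\<Sum>l<d*e. g l) = (\<Sum>i<d. sum g {i*e..<i*e+e})"
    using sum.nat_group[of g e d] by simp
  also have "\<dots> = (\<Sum>i<d. \<Sum>j<e. g (i*e+j))"
  proof (rule sum.cong[OF refl])
    fix i
    have "sum g {i*e..<i*e+e} = sum g {0+i*e..<e+i*e}" by (simp add: add.commute)
    also have "\<dots> = (\<Sum>j=0..<e. g (j + i*e))" by (rule sum.shift_bounds_nat_ivl)
    finally show "sum g {i*e..<i*e+e} = (\<Sum>j<e. g (i*e+j))"
      by (simp add: atLeast0LessThan add.commute)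
  qed
  finally show ?thesis .
qed

lemma alg_int_add_mult:
  assumes "algebraic_int (\<alpha>::complex)" "algebraic_int \<beta>"
  shows "algebraic_int (\<alpha> + \<beta>) \<and> algebraic_int (\<alpha> * \<beta>)"
proof -
  obtain d A where d: "d > 0" and hA: "\<And>i. i < d \<Longrightarrow> \<alpha> * \<alpha>^i = (\<Sum>i'<d. of_int (A i i') * \<alpha>^i')"
    using alg_int_companion[OF assms(1)] by blast
  obtain e B where e: "e > 0" and hB: "\<And>j. j < e \<Longrightarrow> \<beta> * \<beta>^j = (\<Sum>j'<e. of_int (B j j') * \<beta>^j')"
    using alg_int_companion[OF assms(2)] by blast
  define v where "v = (\<lambda>l. \<alpha>^(l div e) * \<beta>^(l mod e))"
  have n: "0 < d * e" using d e by simp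
  have v0: "v 0 \<noteq> 0" by (simp add: v_def)
  have dm: "(i*e+j) div e = i" "(i*e+j) mod e = j" if "j < e" for i j
    using that e by auto
  have kdec: "k div e < d" "k mod e < e" if "k < d * e" for k
    using that e by (auto simp: less_mult_imp_div_less)
  define Ms where "Ms = (\<lambda>k l. A (k div e) (l div e) * (if k mod e = l mod e then 1 else 0)
        + (if k div e = l div e then 1 else 0) * B (k mod e) (l mod e))"
  define Mp where "Mp = (\<lambda>k l. A (k div e) (l div e) * B (k mod e) (l mod e))"
  have "algebraic_int (\<alpha> + \<beta>)"
  proof (rule alg_int_from_matrix[where kz=0 and n="d*e" and v=v, OF n v0])
    fix k assume k: "k < d * e"
    define i where "i = k div e"
    define j where "j = k mod e"
    have i: "i < d" and j: "j < e" unfolding i_def j_def using kdec[OF k] by auto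
    have "(\<Sum>l<d*e. of_int (Ms k l) * v l)
        = (\<Sum>i'<d. \<Sum>j'<e. of_int (Ms k (i'*e+j')) * v (i'*e+j'))" by (rule sum_pairs)
    also have "\<dots> = (\<Sum>i'<d. \<Sum>j'<e. (of_int (A i i') * \<alpha>^i') * (if j = j' then \<beta>^j' else 0)
                 + (if i = i' then \<alpha>^i' else 0) * (of_int (B j j') * \<beta>^j'))"
      by (intro sum.cong refl) (simp add: Ms_def v_def dm i_def[symmetric] j_def[symmetric] algebra_simps)
    also have "\<dots> = (\<Sum>i'<d. \<Sum>j'<e. (of_int (A i i') * \<alpha>^i') * (if j = j' then \<beta>^j' else 0))
                 + (\<Sum>i'<d. \<Sum>j'<e. (if i = i' then \<alpha>^i' else 0) * (of_int (B j j') * \<beta>^j'))"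
      by (simp add: sum.distrib)
    also have "\<dots> = (\<Sum>i'<d. of_int (A i i') * \<alpha>^i') * \<beta>^j + \<alpha>^i * (\<Sum>j'<e. of_int (B j j') * \<beta>^j')"
    proof -
      have 1: "(\<Sum>i'<d. \<Sum>j'<e. (of_int (A i i') * \<alpha>^i') * (if j = j' then \<beta>^j' else 0))
          = (\<Sum>i'<d. (of_int (A i i') * \<alpha>^i') * (\<Sum>j'<e. (if j = j' then \<beta>^j' else 0)))"
        by (simp only: sum_distrib_left)
      have 2: "(\<Sum>i'<d. \<Sum>j'<e. (if i = i' then \<alpha>^i' else 0) * (of_int (B j j') * \<beta>^j'))
          = (\<Sum>i'<d. (if i = i' then \<alpha>^i' else 0) * (\<Sum>j'<e. (of_int (B j j') * \<beta>^j')))"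
        by (simp only: sum_distrib_left)
      have 3: "(\<Sum>j'<e. (if j = j' then \<beta>^j' else 0)) = \<beta>^j" using j by (simp add: sum.delta)
      have 4: "(\<Sum>i'<d. (if i = i' then \<alpha>^i' else 0) * Y) = \<alpha>^i * Y" for Y
      proof -
        have "(\<Sum>i'<d. (if i = i' then \<alpha>^i' else 0) * Y) = (\<Sum>i'<d. if i = i' then \<alpha>^i' * Y else 0)"
          by (rule sum.cong) auto
        also have "\<dots> = \<alpha>^i * Y" using i by (simp add: sum.delta)
        finally show ?thesis .
      qed
      show ?thesis unfolding 1 2 3 4 by (simp add: sum_distrib_right)
    qed
    also have "\<dots> = (\<alpha> * \<alpha>^i) * \<beta>^j + \<alpha>^i * (\<beta> * \<beta>^j)"
      unfolding hA[OF i] hB[OF j] ..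
    also have "\<dots> = (\<alpha> + \<beta>) * v k"
      by (simp add: v_def i_def[symmetric] j_def[symmetric] algebra_simps)
    finally show "(\<Sum>l<d*e. of_int (Ms k l) * v l) = (\<alpha> + \<beta>) * v k" .
  qed
  moreover have "algebraic_int (\<alpha> * \<beta>)"
  proof (rule alg_int_from_matrix[where kz=0 and n="d*e" and v=v, OF n v0])
    fix k assume k: "k < d * e"
    define i where "i = k div e"
    define j where "j = k mod e"
    have i: "i < d" and j: "j < e" unfolding i_def j_def using kdec[OF k] by auto
    have "(\<Sum>l<d*e. of_int (Mp k l) * v l)
        = (\<Sum>i'<d. \<Sum>j'<e. of_int (Mp k (i'*e+j')) * v (i'*e+j'))" by (rule sum_pairs)
    also have "\<dots> = (\<Sum>i'<d. \<Sum>j'<e. (of_int (A i i') * \<alpha>^i') * (of_int (B j j') * \<beta>^j'))"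
      by (intro sum.cong refl) (simp add: Mp_def v_def dm i_def[symmetric] j_def[symmetric] algebra_simps)
    also have "\<dots> = (\<Sum>i'<d. of_int (A i i') * \<alpha>^i') * (\<Sum>j'<e. of_int (B j j') * \<beta>^j')"
      by (simp add: sum_product)
    also have "\<dots> = (\<alpha> * \<alpha>^i) * (\<beta> * \<beta>^j)"
      unfolding hA[OF i] hB[OF j] ..
    also have "\<dots> = (\<alpha> * \<beta>) * v k"
      by (simp add: v_def i_def[symmetric] j_def[symmetric] algebra_simps)
    finally show "(\<Sum>l<d*e. of_int (Mp k l) * v l) = (\<alpha> * \<beta>) * v k" .
  qed
  ultimately show ?thesis ..
qed



lemma algebraic_integer_iff: "algebraic_integer x \<longleftrightarrow> algebraic_int x"
  unfolding algebraic_integer_def algebraic_int.simps by blast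

locale OT =
  fixes K :: "complex set" and \<sigma> :: "nat \<Rightarrow> complex \<Rightarrow> complex" and s :: nat and G :: "complex set"
  assumes fld: "OT_field K \<sigma> s" and adm: "admissible K \<sigma> s G"
begin

lemma s1: "s \<ge> 1" using fld by (simp add: OT_field_def)
lemma subf: "subfield_C K" using fld by (simp add: OT_field_def)
lemma K0: "0 \<in> K" and K1: "1 \<in> K" using subf by (auto simp: subfield_C_def)
lemma Kadd: "x \<in> K \<Longrightarrow> y \<in> K \<Longrightarrow> x + y \<in> K"
  and Kdiff: "x \<in> K \<Longrightarrow> y \<in> K \<Longrightarrow> x - y \<in> K"
  and Kmult: "x \<in> K \<Longrightarrow> y \<in> K \<Longrightarrow> x * y \<in> K"
  and Kinv: "x \<in> K \<Longrightarrow> inverse x \<in> K"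
proof -
  have h: "\<forall>x\<in>K. \<forall>y\<in>K. x + y \<in> K \<and> x - y \<in> K \<and> x * y \<in> K" "\<forall>x\<in>K. x \<noteq> 0 \<longrightarrow> inverse x \<in> K"
    using subf unfolding subfield_C_def by blast+
  show "x \<in> K \<Longrightarrow> y \<in> K \<Longrightarrow> x + y \<in> K" using h(1) by blast
  show "x \<in> K \<Longrightarrow> y \<in> K \<Longrightarrow> x - y \<in> K" using h(1) by blast
  show "x \<in> K \<Longrightarrow> y \<in> K \<Longrightarrow> x * y \<in> K" using h(1) by blast
  show "x \<in> K \<Longrightarrow> inverse x \<in> K" using h(2) K0 by (cases "x = 0") auto
qed

lemma Kint: "of_int n \<in> K"
proof -
  have nat: "of_nat m \<in> K" for m
  proof (induction m)
    case 0 then show ?case using K0 by simp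
  next
    case (Suc m) then show ?case using Kadd[OF Suc K1] by (simp add: add.commute)
  qed
  show ?thesis
  proof (cases n)
    case (nonneg m) then show ?thesis using nat by simp
  next
    case (neg m) then show ?thesis using Kdiff[OF K0 nat[of "Suc m"]] by simp
  qed
qed

lemma emb: "j < s + 2 \<Longrightarrow> field_embedding K (\<sigma> j)" using fld by (simp add: OT_field_def)

lemma sig1: "j < s + 2 \<Longrightarrow> \<sigma> j 1 = 1" using emb by (simp add: field_embedding_def)
lemma sigadd: "j < s + 2 \<Longrightarrow> x \<in> K \<Longrightarrow> y \<in> K \<Longrightarrow> \<sigma> j (x + y) = \<sigma> j x + \<sigma> j y"
  using emb by (simp add: field_embedding_def)
lemma sigmult: "j < s + 2 \<Longrightarrow> x \<in> K \<Longrightarrow> y \<in> K \<Longrightarrow> \<sigma> j (x * y) = \<sigma> j x * \<sigma> j y"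
  using emb by (simp add: field_embedding_def)
lemma sig0: "j < s + 2 \<Longrightarrow> \<sigma> j 0 = 0"
  using sigadd[of j 0 0] K0 by simp
lemma sigdiff: "j < s + 2 \<Longrightarrow> x \<in> K \<Longrightarrow> y \<in> K \<Longrightarrow> \<sigma> j (x - y) = \<sigma> j x - \<sigma> j y"
  using sigadd[of j "x - y" y] Kdiff by simp
lemma sigint: "j < s + 2 \<Longrightarrow> \<sigma> j (of_int n) = of_int n"
proof -
  assume j: "j < s + 2"
  have nat: "\<sigma> j (of_nat m) = of_nat m" for m
  proof (induction m)
    case 0 then show ?case using sig0[OF j] by simp
  next
    case (Suc m)
    have "\<sigma> j (of_nat (Suc m)) = \<sigma> j (of_nat m + 1)" by (simp add: add.commute)
    also have "\<dots> = of_nat m + 1" using sigadd[OF j Kint[of "int m"] K1] Suc sig1[OF j] by simp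
    finally show ?case by simp
  qed
  show ?thesis
  proof (cases n)
    case (nonneg m) then show ?thesis using nat by simp
  next
    case (neg m)
    have "\<sigma> j (0 - of_nat (Suc m)) = 0 - of_nat (Suc m)"
      using sigdiff[OF j K0 Kint[of "int (Suc m)"]] nat[of "Suc m"] sig0[OF j] by simp
    then show ?thesis using neg by simp
  qed
qed

lemma sigsum: assumes j: "j < s + 2" and "finite A" and "\<And>i. i \<in> A \<Longrightarrow> f i \<in> K"
  shows "(\<Sum>i\<in>A. f i) \<in> K \<and> \<sigma> j (\<Sum>i\<in>A. f i) = (\<Sum>i\<in>A. \<sigma> j (f i))"
  using assms(2,3)
proof (induction A rule: finite_induct)
  case empty then show ?case using K0 sig0[OF j] by simp
next
  case (insert x F)
  then show ?case using Kadd sigadd[OF j] by simp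
qed

lemma sigpow: assumes j: "j < s + 2" and x: "x \<in> K" shows "x ^ n \<in> K \<and> \<sigma> j (x ^ n) = \<sigma> j x ^ n"
proof (induction n)
  case 0 then show ?case using K1 sig1[OF j] by simp
next
  case (Suc n) then show ?case using Kmult[OF x] sigmult[OF j x] by simp
qed

definition OK where "OK = ring_of_integers K"

lemma OK_K: "b \<in> OK \<Longrightarrow> b \<in> K" by (simp add: OK_def ring_of_integers_def)
lemma OKadd: "x \<in> OK \<Longrightarrow> y \<in> OK \<Longrightarrow> x + y \<in> OK"
  and OKmult: "x \<in> OK \<Longrightarrow> y \<in> OK \<Longrightarrow> x * y \<in> OK"
  and OKminus: "x \<in> OK \<Longrightarrow> - x \<in> OK"
proof -
  show "x \<in> OK \<Longrightarrow> y \<in> OK \<Longrightarrow> x + y \<in> OK"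
    unfolding OK_def ring_of_integers_def algebraic_integer_iff mem_Collect_eq
    using alg_int_add_mult[of x y] Kadd[of x y] by blast
  show "x \<in> OK \<Longrightarrow> y \<in> OK \<Longrightarrow> x * y \<in> OK"
    unfolding OK_def ring_of_integers_def algebraic_integer_iff mem_Collect_eq
    using alg_int_add_mult[of x y] Kmult[of x y] by blast
  show "x \<in> OK \<Longrightarrow> - x \<in> OK"
    unfolding OK_def ring_of_integers_def algebraic_integer_iff mem_Collect_eq
    using algebraic_int_minus[of x] Kdiff[OF K0, of x] by simp
qed
lemma OKdiff: "x \<in> OK \<Longrightarrow> y \<in> OK \<Longrightarrow> x - y \<in> OK"
proof -
  assume "x \<in> OK" "y \<in> OK"
  hence "x + - y \<in> OK" using OKadd OKminus by blast
  thus ?thesis by simp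
qed
lemma OKint: "of_int n \<in> OK"
  unfolding OK_def ring_of_integers_def algebraic_integer_iff mem_Collect_eq
  using Kint[of n] algebraic_int_of_int[of n] by blast
lemma OK0: "0 \<in> OK" using OKint[of 0] by simp
lemma OKsum: assumes "finite A" "\<And>i. i \<in> A \<Longrightarrow> f i \<in> OK" shows "(\<Sum>i\<in>A. f i) \<in> OK"
  using assms by (induction A rule: finite_induct) (simp_all add: OK0 OKadd)

lemma Gsub: "mult_subgroup G (pos_units K \<sigma> s)" using adm by (simp add: admissible_def)
lemma G_OK: "a \<in> G \<Longrightarrow> a \<in> OK"
  using Gsub by (auto simp: mult_subgroup_def pos_units_def units_of_OK_def OK_def)
lemma G_K: "a \<in> G \<Longrightarrow> a \<in> K" using G_OK OK_K by blast
lemma G1: "1 \<in> G" and Gmult: "a \<in> G \<Longrightarrow> b \<in> G \<Longrightarrow> a * b \<in> G"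
  and Ginv: "a \<in> G \<Longrightarrow> inverse a \<in> G"
  using Gsub by (auto simp: mult_subgroup_def)
lemma Gnz: "a \<in> G \<Longrightarrow> a \<noteq> 0"
  using Gsub by (auto simp: mult_subgroup_def pos_units_def units_of_OK_def)
lemma Gpow: "a \<in> G \<Longrightarrow> a ^ n \<in> G"
  by (induction n) (auto simp: G1 Gmult)
lemma Greal: "a \<in> G \<Longrightarrow> j < s \<Longrightarrow> \<sigma> j a = complex_of_real (Re (\<sigma> j a)) \<and> Re (\<sigma> j a) > 0"
  using Gsub unfolding mult_subgroup_def pos_units_def by (auto simp: complex_is_Real_iff)
lemma Kreal: "x \<in> K \<Longrightarrow> j < s \<Longrightarrow> \<sigma> j x = complex_of_real (Re (\<sigma> j x))"
  using fld unfolding OT_field_def by (auto simp: complex_is_Real_iff)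
lemma sig_nz: "a \<in> G \<Longrightarrow> j < s + 2 \<Longrightarrow> \<sigma> j a \<noteq> 0"
proof
  assume a: "a \<in> G" and j: "j < s + 2" and z: "\<sigma> j a = 0"
  have "\<sigma> j (a * inverse a) = \<sigma> j a * \<sigma> j (inverse a)" by (rule sigmult[OF j G_K[OF a] G_K[OF Ginv[OF a]]])
  thus False using z sig1[OF j] Gnz[OF a] by simp
qed
lemma sig_inv: "a \<in> G \<Longrightarrow> j < s + 2 \<Longrightarrow> \<sigma> j (inverse a) = inverse (\<sigma> j a)"
proof -
  assume a: "a \<in> G" and j: "j < s + 2"
  have "\<sigma> j (a * inverse a) = \<sigma> j a * \<sigma> j (inverse a)" by (rule sigmult[OF j G_K[OF a] G_K[OF Ginv[OF a]]])
  hence "\<sigma> j a * \<sigma> j (inverse a) = 1" using sig1[OF j] Gnz[OF a] by simp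
  thus ?thesis using sig_nz[OF a j] by (simp add: field_simps)
qed

end


lemma open_nbhd:
  fixes U :: "(nat \<Rightarrow> complex) set"
  assumes "open U" "z \<in> U"
  shows "\<exists>\<delta>>0. \<forall>y. (\<forall>j<s. cmod (y j - z j) < \<delta>) \<and> (\<forall>j\<ge>s. y j = z j) \<longrightarrow> y \<in> U"
proof -
  have "openin (product_topology (\<lambda>i. euclidean) UNIV) U" using assms(1) by (simp add: open_fun_def)
  then obtain X where X: "z \<in> (\<Pi>\<^sub>E i\<in>UNIV. X i)" "\<And>i. openin euclidean (X i)"
      "(\<Pi>\<^sub>E i\<in>UNIV. X i) \<subseteq> U"
    using product_topology_open_contains_basis[OF _ assms(2)] by blast
  have "\<forall>i. \<exists>e>0. ball (z i) e \<subseteq> X i"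
  proof
    fix i
    have "z i \<in> X i" using X(1) by auto
    moreover have "open (X i)" using X(2) by simp
    ultimately show "\<exists>e>0. ball (z i) e \<subseteq> X i" using open_contains_ball by blast
  qed
  then obtain e where e: "\<And>i. e i > 0" "\<And>i. ball (z i) (e i) \<subseteq> X i" by metis
  define \<delta> where "\<delta> = Min (insert 1 (e ` {..<s}))"
  have \<delta>0: "\<delta> > 0" unfolding \<delta>_def using e(1) by (subst Min_gr_iff) auto
  have \<delta>le: "\<delta> \<le> e j" if "j < s" for j unfolding \<delta>_def using that by (intro Min_le) auto
  show ?thesis
  proof (intro exI[of _ \<delta>] conjI allI impI \<delta>0)
    fix y assume y: "(\<forall>j<s. cmod (y j - z j) < \<delta>) \<and> (\<forall>j\<ge>s. y j = z j)"
    have "y \<in> (\<Pi>\<^sub>E i\<in>UNIV. X i)"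
    proof (simp add: PiE_def Pi_def, intro allI)
      fix i show "y i \<in> X i"
      proof (cases "i < s")
        case True
        have "cmod (y i - z i) < \<delta>" using y True by blast
        hence "dist (z i) (y i) < e i" using \<delta>le[OF True] by (simp add: dist_norm norm_minus_commute)
        thus ?thesis using e(2)[of i] by auto
      next
        case False
        thus ?thesis using y X(1) by auto
      qed
    qed
    thus "y \<in> U" using X(3) by blast
  qed
qed

context OT
begin

abbreviation "\<pi> \<equiv> OT_pi K \<sigma> s G"
abbreviation "D \<equiv> OT_domain s"

lemma OK_eq: "ring_of_integers K = OK" by (simp add: OK_def)

lemma gamma_comp:
  assumes a: "a \<in> G" "a' \<in> G" and b: "b \<in> OK" "b' \<in> OK"
  shows "gamma_act \<sigma> s a' b' (gamma_act \<sigma> s a b w) = gamma_act \<sigma> s (a' * a) (a' * b + b') w"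
proof
  fix j show "gamma_act \<sigma> s a' b' (gamma_act \<sigma> s a b w) j = gamma_act \<sigma> s (a' * a) (a' * b + b') w j"
  proof (cases "j \<le> s")
    case True
    hence j: "j < s + 2" by simp
    have "\<sigma> j (a' * a) = \<sigma> j a' * \<sigma> j a" by (rule sigmult[OF j G_K G_K]) (use a in auto)
    moreover have "\<sigma> j (a' * b + b') = \<sigma> j a' * \<sigma> j b + \<sigma> j b'"
      using sigadd[OF j Kmult[OF G_K[OF a(2)] OK_K[OF b(1)]] OK_K[OF b(2)]]
            sigmult[OF j G_K[OF a(2)] OK_K[OF b(1)]] by simp
    ultimately show ?thesis using True by (simp add: gamma_act_def algebra_simps)
  qed (simp add: gamma_act_def)
qed

lemma orbit_eq:
  assumes a: "a \<in> G" and b: "b \<in> OK" and w: "\<forall>j>s. w j = 0"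
  shows "\<pi> (gamma_act \<sigma> s a b w) = \<pi> w"
proof
  show "\<pi> (gamma_act \<sigma> s a b w) \<subseteq> \<pi> w"
  proof
    fix y assume "y \<in> \<pi> (gamma_act \<sigma> s a b w)"
    then obtain a' b' where ab: "a' \<in> G" "b' \<in> OK" "y = gamma_act \<sigma> s a' b' (gamma_act \<sigma> s a b w)"
      by (auto simp: OT_pi_def OK_eq)
    hence "y = gamma_act \<sigma> s (a' * a) (a' * b + b') w" using gamma_comp a b by simp
    moreover have "a' * a \<in> G" using Gmult ab a by blast
    moreover have "a' * b + b' \<in> OK" using OKadd OKmult G_OK ab b by blast
    ultimately show "y \<in> \<pi> w" by (auto simp: OT_pi_def OK_eq)
  qed
next
  show "\<pi> w \<subseteq> \<pi> (gamma_act \<sigma> s a b w)"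
  proof
    fix y assume "y \<in> \<pi> w"
    then obtain a' b' where ab: "a' \<in> G" "b' \<in> OK" "y = gamma_act \<sigma> s a' b' w"
      by (auto simp: OT_pi_def OK_eq)
    define a'' where "a'' = a' * inverse a"
    define b'' where "b'' = b' - a'' * b"
    have a'': "a'' \<in> G" unfolding a''_def using Gmult Ginv ab a by blast
    have b'': "b'' \<in> OK" unfolding b''_def using OKdiff OKmult G_OK a'' ab b by blast
    have "gamma_act \<sigma> s a'' b'' (gamma_act \<sigma> s a b w) = y"
    proof
      fix j show "gamma_act \<sigma> s a'' b'' (gamma_act \<sigma> s a b w) j = y j"
      proof (cases "j \<le> s")
        case True
        hence j: "j < s + 2" by simp
        have 1: "\<sigma> j a'' = \<sigma> j a' * inverse (\<sigma> j a)"
          unfolding a''_def using sigmult[OF j G_K[OF ab(1)] G_K[OF Ginv[OF a]]] sig_inv[OF a j] by simp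
        have 2: "\<sigma> j b'' = \<sigma> j b' - \<sigma> j a'' * \<sigma> j b"
          unfolding b''_def using sigdiff[OF j OK_K[OF ab(2)] Kmult[OF G_K[OF a''] OK_K[OF b]]]
            sigmult[OF j G_K[OF a''] OK_K[OF b]] by simp
        have nz: "\<sigma> j a \<noteq> 0" by (rule sig_nz[OF a j])
        show ?thesis using True ab(3) nz unfolding gamma_act_def 2 1 by (simp add: field_simps)
      next
        case False thus ?thesis using ab(3) by (simp add: gamma_act_def)
      qed
    qed
    thus "y \<in> \<pi> (gamma_act \<sigma> s a b w)" using a'' b'' by (auto simp: OT_pi_def OK_eq)
  qed
qed

definition "Pt U \<longleftrightarrow> U \<subseteq> \<pi> ` D \<and> openin (top_of_set D) {z \<in> D. \<pi> z \<in> U}"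

lemma istop: "istopology Pt"
  unfolding istopology_def
proof (intro conjI allI impI)
  fix S T assume "Pt S" "Pt T"
  moreover have "{z \<in> D. \<pi> z \<in> S \<inter> T} = {z \<in> D. \<pi> z \<in> S} \<inter> {z \<in> D. \<pi> z \<in> T}" by auto
  ultimately show "Pt (S \<inter> T)" unfolding Pt_def by (auto intro: openin_Int)
next
  fix \<K> assume h: "\<forall>K\<in>\<K>. Pt K"
  have "{z \<in> D. \<pi> z \<in> \<Union>\<K>} = \<Union>((\<lambda>K. {z \<in> D. \<pi> z \<in> K}) ` \<K>)" by auto
  moreover have "openin (top_of_set D) (\<Union>((\<lambda>K. {z \<in> D. \<pi> z \<in> K}) ` \<K>))"
    using h unfolding Pt_def by (intro openin_Union) auto
  ultimately show "Pt (\<Union>\<K>)" using h unfolding Pt_def by auto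
qed

lemma openin_T: "openin (OT_topology K \<sigma> s G) U \<longleftrightarrow> Pt U"
proof -
  have "OT_topology K \<sigma> s G = topology Pt" unfolding OT_topology_def Pt_def[abs_def] ..
  thus ?thesis using istop by simp
qed

lemma in_topspace: "z \<in> D \<Longrightarrow> \<pi> z \<in> topspace (OT_topology K \<sigma> s G)"
proof -
  assume z: "z \<in> D"
  have "{z \<in> D. \<pi> z \<in> \<pi> ` D} = D" by auto
  hence "Pt (\<pi> ` D)" unfolding Pt_def by auto
  hence "openin (OT_topology K \<sigma> s G) (\<pi> ` D)" using openin_T by simp
  thus ?thesis using openin_subset z by blast
qed

end


lemma solve_lin:
  fixes v :: "nat \<Rightarrow> nat \<Rightarrow> real" and n :: nat
  assumes indep: "\<forall>c :: nat \<Rightarrow> real. (\<forall>j<n. (\<Sum>i<n. c i * v i j) = 0) \<longrightarrow> (\<forall>i<n. c i = 0)"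
  shows "\<exists>c. \<forall>j<n. (\<Sum>i<n. c i * v i j) = y j"
proof -
  define A :: "real mat" where "A = Matrix.mat n n (\<lambda>(j,i). v i j)"
  have A: "A \<in> carrier_mat n n" by (simp add: A_def)
  have mv: "(A *\<^sub>v w) $ j = (\<Sum>i<n. w $ i * v i j)" if "j < n" "w \<in> carrier_vec n" for w j
    using that by (simp add: A_def scalar_prod_def row_def atLeast0LessThan mult.commute)
  have "det A \<noteq> 0"
  proof
    assume "det A = 0"
    then obtain w where w: "w \<in> carrier_vec n" "w \<noteq> 0\<^sub>v n" "A *\<^sub>v w = 0\<^sub>v n"
      using det_0_iff_vec_prod_zero[OF A] by blast
    have "\<forall>j<n. (\<Sum>i<n. (\<lambda>i. w $ i) i * v i j) = 0"
    proof (intro allI impI)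
      fix j assume j: "j < n"
      have "(A *\<^sub>v w) $ j = 0" using w(3) j by simp
      thus "(\<Sum>i<n. (\<lambda>i. w $ i) i * v i j) = 0" using mv[OF j w(1)] by simp
    qed
    hence "\<forall>i<n. w $ i = 0" using indep by blast
    hence "w = 0\<^sub>v n" using w(1) by (intro eq_vecI) auto
    thus False using w(2) by simp
  qed
  hence "A \<in> Units (ring_mat TYPE(real) n ())" by (rule det_non_zero_imp_unit[OF A])
  then obtain B where B: "B \<in> carrier_mat n n" "A * B = 1\<^sub>m n"
    unfolding Units_def ring_mat_def by auto
  define w where "w = B *\<^sub>v Matrix.vec n y"
  have wc: "w \<in> carrier_vec n" using B(1) by (simp add: w_def)
  have "A *\<^sub>v w = Matrix.vec n y"
  proof -
    have "A *\<^sub>v (B *\<^sub>v Matrix.vec n y) = (A * B) *\<^sub>v Matrix.vec n y"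
      using assoc_mult_mat_vec[OF A B(1), of "Matrix.vec n y"] by simp
    also have "\<dots> = Matrix.vec n y" unfolding B(2) by simp
    finally show ?thesis unfolding w_def .
  qed
  hence "\<forall>j<n. (\<Sum>i<n. w $ i * v i j) = y j"
    using mv[OF _ wc] by (metis index_vec)
  thus ?thesis by blast
qed

context OT
begin

lemma good_unit:
  "\<exists>u\<in>G. (\<forall>j<s. Re (\<sigma> j u) < 1) \<and> (\<forall>i<s. \<forall>j<s. i \<noteq> j \<longrightarrow> Re (\<sigma> i u) \<noteq> Re (\<sigma> j u))"
proof -
  obtain v where v: "\<forall>c :: nat \<Rightarrow> real. (\<forall>j<s. (\<Sum>i<s. c i * v i j) = 0) \<longrightarrow> (\<forall>i<s. c i = 0)"
    "Lambda \<sigma> s G = {(\<lambda>j. \<Sum>i<s. of_int (k i) * v i j) | k :: nat \<Rightarrow> int. True}"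
    using adm unfolding admissible_def full_lattice_def by blast
  define R where "R = 1 + (\<Sum>i<s. \<Sum>j<s. \<bar>v i j\<bar>)"
  have R: "\<bar>v i j\<bar> \<le> (\<Sum>i<s. \<Sum>j<s. \<bar>v i j\<bar>)" if "i < s" "j < s" for i j
  proof -
    have "\<bar>v i j\<bar> \<le> (\<Sum>j<s. \<bar>v i j\<bar>)" using that by (intro member_le_sum) auto
    also have "\<dots> \<le> (\<Sum>i<s. \<Sum>j<s. \<bar>v i j\<bar>)" using that
      by (intro member_le_sum[where f="\<lambda>i. \<Sum>j<s. \<bar>v i j\<bar>"]) (auto intro: sum_nonneg)
    finally show ?thesis .
  qed
  define y where "y = (\<lambda>j. - 3 * R * (real j + 1))"
  obtain c where c: "\<forall>j<s. (\<Sum>i<s. c i * v i j) = y j" using solve_lin[OF v(1)] by blast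
  define k where "k = (\<lambda>i. \<lfloor>c i\<rfloor>)"
  define lam where "lam = (\<lambda>j. \<Sum>i<s. of_int (k i) * v i j)"
  have "lam \<in> Lambda \<sigma> s G" unfolding v(2) lam_def by blast
  then obtain u where u: "u \<in> G" "lam = log_map \<sigma> s u" unfolding Lambda_def by blast
  have close: "\<bar>lam j - y j\<bar> < R" if j: "j < s" for j
  proof -
    have "lam j - y j = (\<Sum>i<s. (of_int (k i) - c i) * v i j)"
      using c j by (simp add: lam_def sum_subtractf left_diff_distrib)
    also have "\<bar>\<dots>\<bar> \<le> (\<Sum>i<s. \<bar>(of_int (k i) - c i) * v i j\<bar>)" by (rule sum_abs)
    also have "\<dots> \<le> (\<Sum>i<s. \<bar>v i j\<bar>)"
    proof (rule sum_mono)
      fix i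
      have "\<bar>of_int (k i) - c i\<bar> \<le> 1" unfolding k_def
        using of_int_floor_le[of "c i"] real_of_int_floor_gt_diff_one[of "c i"] by linarith
      thus "\<bar>(of_int (k i) - c i) * v i j\<bar> \<le> \<bar>v i j\<bar>"
        by (simp add: abs_mult mult_left_le_one_le)
    qed
    also have "\<dots> \<le> (\<Sum>i<s. \<Sum>j<s. \<bar>v i j\<bar>)"
    proof -
      have "(\<Sum>i<s. \<bar>v i j\<bar>) \<le> (\<Sum>i<s. \<Sum>j<s. \<bar>v i j\<bar>)"
        using j by (intro sum_mono member_le_sum) auto
      thus ?thesis .
    qed
    finally show ?thesis unfolding R_def by linarith
  qed
  have Rpos: "R > 0" unfolding R_def by (simp add: sum_nonneg add_pos_nonneg)
  have lam_eq: "lam j = ln (Re (\<sigma> j u))" if "j < s" for j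
    using u(2) that by (simp add: log_map_def)
  have re_eq: "Re (\<sigma> j u) = exp (lam j)" if "j < s" for j
    using lam_eq[OF that] Greal[OF u(1) that] by simp
  show ?thesis
  proof (intro bexI[OF _ u(1)] conjI allI impI)
    fix j assume j: "j < s"
    have "3 * R * 1 \<le> 3 * R * (real j + 1)" using Rpos by (intro mult_left_mono) auto
    hence "lam j < 0" using close[OF j] Rpos unfolding y_def abs_less_iff by linarith
    thus "Re (\<sigma> j u) < 1" using re_eq[OF j] by simp
  next
    fix i j assume ij: "i < s" "j < s" "i \<noteq> j"
    have "lam i \<noteq> lam j"
    proof (cases "i < j")
      case True
      hence "real i + 1 \<le> real j" by simp
      hence "3 * R * (real i + 1) \<le> 3 * R * real j" using Rpos by simp
      thus ?thesis using close[OF ij(1)] close[OF ij(2)] Rpos unfolding y_def abs_less_iff by (simp add: algebra_simps)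
    next
      case False
      hence "real j + 1 \<le> real i" using ij by simp
      hence "3 * R * (real j + 1) \<le> 3 * R * real i" using Rpos by simp
      thus ?thesis using close[OF ij(1)] close[OF ij(2)] Rpos unfolding y_def abs_less_iff by (simp add: algebra_simps)
    qed
    thus "Re (\<sigma> i u) \<noteq> Re (\<sigma> j u)" using re_eq ij by simp
  qed
qed

end


lemma poly_sum_le:
  fixes p :: "real poly"
  assumes "degree p \<le> D"
  shows "poly p x = (\<Sum>k\<le>D. coeff p k * x^k)"
proof -
  have "poly p x = (\<Sum>k\<le>degree p. coeff p k * x^k)" by (rule poly_altdef)
  also have "\<dots> = (\<Sum>k\<le>D. coeff p k * x^k)"
    by (rule sum.mono_neutral_left) (use assms in \<open>auto simp: coeff_eq_0\<close>)
  finally show ?thesis .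
qed

context OT
begin

lemma dense:
  assumes \<delta>: "\<delta> > 0"
  shows "\<exists>b\<in>OK. \<forall>j<s. \<bar>Re (\<sigma> j b) - r j\<bar> < \<delta>"
proof -
  obtain u where u: "u \<in> G" "\<forall>j<s. Re (\<sigma> j u) < 1"
    "\<forall>i<s. \<forall>j<s. i \<noteq> j \<longrightarrow> Re (\<sigma> i u) \<noteq> Re (\<sigma> j u)"
    using good_unit by blast
  define x where "x = (\<lambda>j. Re (\<sigma> j u))"
  have x0: "0 < x j" "x j < 1" if "j < s" for j using Greal[OF u(1) that] u(2) that by (auto simp: x_def)
  have sux: "\<sigma> j u = complex_of_real (x j)" if "j < s" for j using Greal[OF u(1) that] by (simp add: x_def)
  define Q where "Q = (\<lambda>j. \<Prod>i\<in>{..<s} - {j}. [:- x i, 1:])"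
  define den where "den = (\<lambda>j. \<Prod>i\<in>{..<s} - {j}. (x j - x i))"
  have den0: "den j \<noteq> 0" if "j < s" for j
    unfolding den_def using u(3) that by (auto simp: x_def)
  have polyQ: "poly (Q j) (x l) = (if l = j then den j else 0)" if "j < s" "l < s" for j l
  proof (cases "l = j")
    case True thus ?thesis by (simp add: Q_def den_def poly_prod)
  next
    case False
    hence "l \<in> {..<s} - {j}" using that by auto
    hence "(\<Prod>i\<in>{..<s} - {j}. poly [:- x i, 1:] (x l)) = 0"
      by (intro prod_zero) (auto intro!: bexI[of _ l])
    thus ?thesis using False by (simp add: Q_def poly_prod)
  qed
  define Dg where "Dg = (\<Sum>j<s. degree (Q j))"
  have degQ: "degree (Q j) \<le> Dg" if "j < s" for j
    unfolding Dg_def using that by (intro member_le_sum[where f="\<lambda>j. degree (Q j)"]) auto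
  have ev: "\<forall>j\<in>{..<s}. eventually (\<lambda>N. x j ^ N * (real Dg + 1) < \<delta>) sequentially"
  proof
    fix j assume "j \<in> {..<s}"
    hence "0 < x j" "x j < 1" using x0 by auto
    hence "norm (x j) < 1" by simp
    hence "(\<lambda>N. x j ^ N * (real Dg + 1)) \<longlonglongrightarrow> 0 * (real Dg + 1)"
      by (intro tendsto_mult LIMSEQ_power_zero tendsto_const)
    thus "eventually (\<lambda>N. x j ^ N * (real Dg + 1) < \<delta>) sequentially"
      using \<delta> by (intro order_tendstoD(2)[of _ 0]) simp_all
  qed
  have "eventually (\<lambda>N. \<forall>j\<in>{..<s}. x j ^ N * (real Dg + 1) < \<delta>) sequentially"
    by (rule eventually_ball_finite[OF _ ev]) simp
  then obtain N where N: "\<forall>j<s. x j ^ N * (real Dg + 1) < \<delta>"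
    unfolding eventually_sequentially by auto
  define c where "c = (\<lambda>k. \<Sum>j<s. (r j / x j ^ N / den j) * coeff (Q j) k)"
  define n where "n = (\<lambda>k. \<lfloor>c k\<rfloor>)"
  define b where "b = (\<Sum>k\<le>Dg. of_int (n k) * u ^ (N + k))"
  have bOK: "b \<in> OK" unfolding b_def
    by (intro OKsum OKmult OKint G_OK Gpow u(1)) auto
  have key: "x l ^ N * (\<Sum>k\<le>Dg. c k * x l ^ k) = r l" if l: "l < s" for l
  proof -
    have "(\<Sum>k\<le>Dg. c k * x l ^ k) = (\<Sum>j<s. (r j / x j ^ N / den j) * (\<Sum>k\<le>Dg. coeff (Q j) k * x l ^ k))"
      unfolding c_def by (simp add: sum_distrib_right sum_distrib_left mult.assoc sum.swap[of _ "{..Dg}"])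
    also have "\<dots> = (\<Sum>j<s. (r j / x j ^ N / den j) * poly (Q j) (x l))"
      by (intro sum.cong refl) (simp add: poly_sum_le[OF degQ])
    also have "\<dots> = (\<Sum>j<s. if j = l then r l / x l ^ N else 0)"
      by (intro sum.cong refl) (auto simp: polyQ l den0)
    also have "\<dots> = r l / x l ^ N" using l by simp
    finally show ?thesis using x0[OF l] by simp
  qed
  show ?thesis
  proof (intro bexI[OF _ bOK] allI impI)
    fix l assume l: "l < s"
    hence l2: "l < s + 2" by simp
    have "\<sigma> l b = (\<Sum>k\<le>Dg. \<sigma> l (of_int (n k) * u ^ (N + k)))"
      unfolding b_def using sigsum[OF l2, of "{..Dg}" "\<lambda>k. of_int (n k) * u^(N+k)"]
        Kmult[OF Kint sigpow[OF l2 G_K[OF u(1)], THEN conjunct1]] by simp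
    also have "\<dots> = (\<Sum>k\<le>Dg. of_int (n k) * \<sigma> l u ^ (N + k))"
      by (intro sum.cong refl) (simp add: sigmult[OF l2 Kint sigpow[OF l2 G_K[OF u(1)], THEN conjunct1]]
           sigint[OF l2] sigpow[OF l2 G_K[OF u(1)]])
    finally have "Re (\<sigma> l b) = (\<Sum>k\<le>Dg. of_int (n k) * x l ^ (N + k))"
      using sux[OF l] by simp
    hence "Re (\<sigma> l b) - r l = x l ^ N * (\<Sum>k\<le>Dg. (of_int (n k) - c k) * x l ^ k)"
      using key[OF l] by (simp add: power_add sum_distrib_left sum_subtractf algebra_simps)
    also have "\<bar>\<dots>\<bar> \<le> x l ^ N * (\<Sum>k\<le>Dg. 1)"
    proof -
      have "\<bar>\<Sum>k\<le>Dg. (of_int (n k) - c k) * x l ^ k\<bar> \<le> (\<Sum>k\<le>Dg. \<bar>(of_int (n k) - c k) * x l ^ k\<bar>)"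
        by (rule sum_abs)
      also have "\<dots> \<le> (\<Sum>k\<le>Dg. 1)"
      proof (rule sum_mono)
        fix k
        have "\<bar>of_int (n k) - c k\<bar> \<le> 1" unfolding n_def
          using of_int_floor_le[of "c k"] real_of_int_floor_gt_diff_one[of "c k"] by linarith
        moreover have "\<bar>x l ^ k\<bar> \<le> 1" using x0[OF l] by (simp add: power_le_one)
        ultimately show "\<bar>(of_int (n k) - c k) * x l ^ k\<bar> \<le> 1"
          by (simp add: abs_mult mult_le_one)
      qed
      finally show ?thesis using x0[OF l] by (simp add: abs_mult)
    qed
    also have "\<dots> < \<delta>" using N l by (simp add: add.commute)
    finally show "\<bar>Re (\<sigma> l b) - r l\<bar> < \<delta>" .
  qed
qed

end


theorem lemma2p1:
  fixes K :: "complex set" and \<sigma> :: "nat \<Rightarrow> complex \<Rightarrow> complex" and s :: nat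
    and G :: "complex set" and t :: "nat \<Rightarrow> complex"
  assumes "OT_field K \<sigma> s"
    and "admissible K \<sigma> s G"
    and "t \<in> OT_domain s"
  shows "OT_leaf K \<sigma> s G t \<subseteq> OT_fiber K \<sigma> s G t \<and>
         OT_fiber K \<sigma> s G t \<subseteq> (OT_topology K \<sigma> s G) closure_of (OT_leaf K \<sigma> s G t)"
proof -
  interpret OT K \<sigma> s G using assms(1,2) by unfold_locales
  have tD: "\<forall>j<s. Im (t j) > 0" "\<forall>j>s. t j = 0" using assms(3) by (auto simp: OT_domain_def)
  have part1: "OT_leaf K \<sigma> s G t \<subseteq> OT_fiber K \<sigma> s G t"
    unfolding OT_leaf_def OT_fiber_def
  proof (rule image_mono, safe)
    fix z assume z: "z \<in> D" "\<forall>j<s. z j = t j"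
    have "log_Im s z - log_Im s t = log_map \<sigma> s 1"
      using z(2) sig1 by (auto simp: log_Im_def log_map_def fun_eq_iff)
    thus "log_Im s z - log_Im s t \<in> Lambda \<sigma> s G" unfolding Lambda_def using G1 by auto
  qed
  have part2: "OT_fiber K \<sigma> s G t \<subseteq> (OT_topology K \<sigma> s G) closure_of (OT_leaf K \<sigma> s G t)"
  proof
    fix x assume "x \<in> OT_fiber K \<sigma> s G t"
    then obtain z where z: "z \<in> D" "log_Im s z - log_Im s t \<in> Lambda \<sigma> s G" "x = \<pi> z"
      unfolding OT_fiber_def by auto
    have zD: "\<forall>j<s. Im (z j) > 0" "\<forall>j>s. z j = 0" using z(1) by (auto simp: OT_domain_def)
    obtain a0 where a0: "a0 \<in> G" "log_Im s z - log_Im s t = log_map \<sigma> s a0"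
      using z(2) unfolding Lambda_def by auto
    have imz: "Im (z j) = Re (\<sigma> j a0) * Im (t j)" if j: "j < s" for j
    proof -
      have "ln (Im (z j)) - ln (Im (t j)) = ln (Re (\<sigma> j a0))"
        using fun_cong[OF a0(2), of j] j by (simp add: log_Im_def log_map_def)
      moreover have "Im (t j) > 0" using tD(1) j by simp
      moreover have "Re (\<sigma> j a0) > 0" using Greal[OF a0(1) j] by simp
      ultimately have "ln (Im (z j)) = ln (Re (\<sigma> j a0) * Im (t j))"
        by (simp add: ln_mult)
      thus ?thesis using zD(1) tD(1) Greal[OF a0(1) j] j by (simp add: ln_inj_iff)
    qed
    show "x \<in> (OT_topology K \<sigma> s G) closure_of (OT_leaf K \<sigma> s G t)"
      unfolding closure_of_def
    proof (intro CollectI conjI allI impI)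
      show "x \<in> topspace (OT_topology K \<sigma> s G)" using in_topspace[OF z(1)] z(3) by simp
      fix U assume U: "x \<in> U \<and> openin (OT_topology K \<sigma> s G) U"
      hence PU: "Pt U" using openin_T by simp
      then obtain V where V: "open V" "{y \<in> D. \<pi> y \<in> U} = D \<inter> V"
        unfolding Pt_def openin_open by auto
      have "z \<in> V" using V(2) z U by auto
      then obtain \<delta> where \<delta>: "\<delta> > 0"
        "\<forall>y. (\<forall>j<s. cmod (y j - z j) < \<delta>) \<and> (\<forall>j\<ge>s. y j = z j) \<longrightarrow> y \<in> V"
        using open_nbhd[OF V(1)] by blast
      define r where "r = (\<lambda>j. Re (z j) - Re (\<sigma> j a0) * Re (t j))"
      obtain b where b: "b \<in> OK" "\<forall>j<s. \<bar>Re (\<sigma> j b) - r j\<bar> < \<delta>"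
        using dense[OF \<delta>(1), of r] by blast
      define w where "w = (\<lambda>j. if j < s then t j else if j = s then (z s - \<sigma> s b) / \<sigma> s a0 else 0)"
      have w0: "\<forall>j>s. w j = 0" by (simp add: w_def)
      have wL: "w \<in> {z \<in> D. \<forall>j<s. z j = t j}" using tD by (auto simp: w_def OT_domain_def)
      define y where "y = gamma_act \<sigma> s a0 b w"
      have diff: "y j - z j = complex_of_real (Re (\<sigma> j b) - r j)" if j: "j < s" for j
      proof -
        have "\<sigma> j a0 = complex_of_real (Re (\<sigma> j a0))" using Greal[OF a0(1) j] by simp
        moreover have "\<sigma> j b = complex_of_real (Re (\<sigma> j b))" using Kreal[OF OK_K[OF b(1)] j] .
        ultimately have "y j = complex_of_real (Re (\<sigma> j a0)) * t j + complex_of_real (Re (\<sigma> j b))"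
          using j by (simp add: y_def gamma_act_def w_def)
        thus ?thesis using imz[OF j] by (simp add: complex_eq_iff r_def)
      qed
      have ys: "\<forall>j\<ge>s. y j = z j"
      proof (intro allI impI)
        fix j assume j: "s \<le> j"
        show "y j = z j"
        proof (cases "j = s")
          case True
          have "\<sigma> s a0 \<noteq> 0" using sig_nz[OF a0(1)] by simp
          thus ?thesis using True by (simp add: y_def gamma_act_def w_def)
        next
          case False thus ?thesis using j zD(2) by (simp add: y_def gamma_act_def)
        qed
      qed
      have ysmall: "\<forall>j<s. cmod (y j - z j) < \<delta>"
      proof (intro allI impI)
        fix j assume j: "j < s"
        have "cmod (y j - z j) = \<bar>Re (\<sigma> j b) - r j\<bar>" unfolding diff[OF j] norm_of_real ..
        thus "cmod (y j - z j) < \<delta>" using b(2) j by simp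
      qed
      have "y \<in> V" using \<delta>(2) ys ysmall by blast
      moreover have "y \<in> D"
      proof -
        have "Im (y j) > 0" if "j < s" for j
        proof -
          have "Im (y j - z j) = 0" unfolding diff[OF that] by simp
          thus ?thesis using zD(1) that by simp
        qed
        moreover have "y j = 0" if "j > s" for j using ys zD(2) that by simp
        ultimately show ?thesis by (simp add: OT_domain_def)
      qed
      ultimately have "\<pi> y \<in> U" using V(2) by blast
      moreover have "\<pi> y = \<pi> w" unfolding y_def by (rule orbit_eq[OF a0(1) b(1) w0])
      moreover have "\<pi> w \<in> OT_leaf K \<sigma> s G t" unfolding OT_leaf_def using wL by blast
      ultimately show "\<exists>y\<in>OT_leaf K \<sigma> s G t. y \<in> U" by auto
    qed
  qed
  show ?thesis using part1 part2 ..
qed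



end
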